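(* Assume $a_1,\dots,a_N,c_1,c_2>0$ with $a_ia_j<1$, $a_ic_1<1$, $a_ic_2<1$ for all $i,j$, and additionally $c_1c_2<1$. For any down-right path $\mathcal P$ in the strip and any fixed $\lambda_1^{(0)}\in\mathbb Z$, the quantity $$Z_{\mathrm{Geo}}=\sum_{\lambda_i^{(j)}\in\mathbb Z,\,(i,j)\neq(1,0)}\mathrm{wt}^{\mathcal{GP}}(\boldsymbol\lambda)$$ (sum over $i\in\{1,2\}$, $0\le j\le N$, $(i,j)\ne(1,0)$) is finite and does not depend on the choice of $\mathcal P$ nor of $\lambda_1^{(0)}$.
   Context: Fix $N\ge1$; extend $a_{j+kN}=a_j$. The strip is $\{(n,m)\in\mathbb Z^2:0\le m\le n\le m+N\}$. A down-right path is a sequence of vertices $\mathbf p_0,\dots,\mathbf p_N$ of the strip with $\mathbf p_0=(m_0,m_0)$ and each step $\mathbf p_j-\mathbf p_{j-1}\in\{(1,0),(0,-1)\}$ (so $\mathbf p_N$ is of the form $(m+N,m)$). Its edge $\mathsf e_j$ from $\mathbf p_{j-1}$ to $\mathbf p_j$ carries the label $\ell_j$: a horizontal edge $(n-1,m)\to(n,m)$ is labelled $a_n$, a vertical edge between $(n,m-1)$ and $(n,m)$ is labelled $a_m$. For $1\le j\le N$ set $(\mathrm{up}(j),\mathrm{low}(j))=(j,j-1)$ if $\mathsf e_j$ is horizontal and $(j-1,j)$ if $\mathsf e_j$ is vertical. For $\boldsymbol\lambda=(\lambda_i^{(j)})_{i\in\{1,2\},0\le j\le N}\in\mathbb Z^{2N+2}$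 define the two-layer Gibbs weight $$\mathrm{wt}^{\mathcal{GP}}(\boldsymbol\lambda)=c_1^{\lambda_1^{(0)}-\lambda_2^{(0)}}c_2^{\lambda_1^{(N)}-\lambda_2^{(N)}}\prod_{j=1}^N\Big[\prod_{i=1}^2\ell_j^{\lambda_i^{(\mathrm{up}(j))}-\lambda_i^{(\mathrm{low}(j))}}\mathbf 1\{\lambda_i^{(\mathrm{up}(j))}\ge\lambda_i^{(\mathrm{low}(j))}\}\Big]\mathbf 1\{\lambda_1^{(\mathrm{low}(j))}\ge\lambda_2^{(\mathrm{up}(j))}\}.$$ *)

theory Defs
  imports "HOL-Analysis.Analysis"
begin

definition in_strip :: "nat \<Rightarrow> int \<times> int \<Rightarrow> bool" where
  "in_strip N v \<longleftrightarrow> 0 \<le> snd v \<and> snd v \<le> fst v \<and> fst v \<le> snd v + int N"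

definition is_horiz :: "(nat \<Rightarrow> int \<times> int) \<Rightarrow> nat \<Rightarrow> bool" where
  "is_horiz p j \<longleftrightarrow> fst (p j) = fst (p (j - 1)) + 1 \<and> snd (p j) = snd (p (j - 1))"

definition is_vert :: "(nat \<Rightarrow> int \<times> int) \<Rightarrow> nat \<Rightarrow> bool" where
  "is_vert p j \<longleftrightarrow> fst (p j) = fst (p (j - 1)) \<and> snd (p j) = snd (p (j - 1)) - 1"

text \<open>A down-right path p_0, ..., p_N in the strip (only the values at 0..N matter).\<close>
definition down_right_path :: "nat \<Rightarrow> (nat \<Rightarrow> int \<times> int) \<Rightarrow> bool" where
  "down_right_path N p \<longleftrightarrow>
     (\<exists>m0. p 0 = (m0, m0)) \<and>
     (\<forall>j\<in>{1..N}. is_horiz p j \<or> is_vert p j) \<and>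
     (\<forall>j\<le>N. in_strip N (p j))"

definition edge_label :: "(int \<Rightarrow> real) \<Rightarrow> (nat \<Rightarrow> int \<times> int) \<Rightarrow> nat \<Rightarrow> real" where
  "edge_label a p j = (if is_horiz p j then a (fst (p j)) else a (snd (p (j - 1))))"

definition up_idx :: "(nat \<Rightarrow> int \<times> int) \<Rightarrow> nat \<Rightarrow> nat" where
  "up_idx p j = (if is_horiz p j then j else j - 1)"

definition low_idx :: "(nat \<Rightarrow> int \<times> int) \<Rightarrow> nat \<Rightarrow> nat" where
  "low_idx p j = (if is_horiz p j then j - 1 else j)"

definition ind :: "bool \<Rightarrow> real" where
  "ind b = (if b then 1 else 0)"

text \<open>Two-layer Gibbs weight; lam i j stands for lambda_i^(j).\<close>
definition wt_GP :: "nat \<Rightarrow> (int \<Rightarrow> real) \<Rightarrow> real \<Rightarrow> real \<Rightarrow> (nat \<Rightarrow> int \<times> int)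
                    \<Rightarrow> (nat \<Rightarrow> nat \<Rightarrow> int) \<Rightarrow> real" where
  "wt_GP N a c1 c2 p lam =
     c1 powi (lam 1 0 - lam 2 0) * c2 powi (lam 1 N - lam 2 N) *
     (\<Prod>j\<in>{1..N}.
        (\<Prod>i\<in>{1,2}. edge_label a p j powi (lam i (up_idx p j) - lam i (low_idx p j))
                      * ind (lam i (up_idx p j) \<ge> lam i (low_idx p j)))
        * ind (lam 1 (low_idx p j) \<ge> lam 2 (up_idx p j)))"

text \<open>Configurations (lambda_i^(j))_{i in {1,2}, 0<=j<=N} with lambda_1^(0) = x fixed;
  entries outside the index range are normalised to 0, so this set is in bijection
  with Z^(2N+1).\<close>
definition configs :: "nat \<Rightarrow> int \<Rightarrow> (nat \<Rightarrow> nat \<Rightarrow> int) set" where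
  "configs N x = {lam. lam 1 0 = x \<and> (\<forall>i j. (i \<notin> {1,2} \<or> j > N) \<longrightarrow> lam i j = 0)}"

end

theory Submission
  imports Defs
begin


lemma tonelli_R:
  fixes f :: "'a \<times> 'b \<Rightarrow> real"
  assumes nn: "\<And>x y. x\<in>A \<Longrightarrow> y\<in>B x \<Longrightarrow> f(x,y) \<ge> 0"
    and inner: "\<And>x. x\<in>A \<Longrightarrow> ((\<lambda>y. f(x,y)) has_sum g x) (B x)"
    and outer: "(g has_sum S) A"
  shows "(f has_sum S) (Sigma A B)"
proof -
  have "f summable_on Sigma A B"
    by (rule summable_on_SigmaI[OF inner]) (use outer nn in \<open>auto dest: has_sum_imp_summable\<close>)
  then show ?thesis using has_sum_SigmaI[where f=f and g=g and A=A and B=B and S=S] inner outer by blast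
qed

lemma has_sum_sum_fin:
  fixes f :: "'i \<Rightarrow> 'a \<Rightarrow> real"
  assumes "finite I" "\<And>i. i\<in>I \<Longrightarrow> (f i has_sum s i) A"
  shows "((\<lambda>x. \<Sum>i\<in>I. f i x) has_sum (\<Sum>i\<in>I. s i)) A"
  using assms
proof (induction I rule: finite_induct)
  case empty then show ?case by simp
next
  case (insert i I)
  then show ?case by (simp add: has_sum_add)
qed

lemma has_sum_geom:
  fixes q :: real
  assumes "0 \<le> q" "q < 1"
  shows "((\<lambda>n::nat. q^n) has_sum (1/(1-q))) UNIV"
  by (rule sums_nonneg_imp_has_sum) (use assms geometric_sums[of q] in auto)

lemma has_sum_geom_from:
  fixes q :: real
  assumes "0 \<le> q" "q < 1"
  shows "((\<lambda>e::nat. if s \<le> e then q^(e-s) else 0) has_sum (1/(1-q))) UNIV"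
proof -
  have "((\<lambda>e::nat. if s \<le> e then q^(e-s) else 0) has_sum (1/(1-q))) UNIV
     \<longleftrightarrow> ((\<lambda>e::nat. if s \<le> e then q^(e-s) else 0) has_sum (1/(1-q))) {s..}"
    by (rule has_sum_cong_neutral) auto
  also have "\<dots> \<longleftrightarrow> ((\<lambda>n::nat. q^n) has_sum (1/(1-q))) UNIV"
    by (rule has_sum_reindex_bij_witness[where j="\<lambda>e. e - s" and i="\<lambda>n. n + s"]) auto
  finally show ?thesis using has_sum_geom[OF assms] by simp
qed



definition Aa :: "real \<Rightarrow> nat \<Rightarrow> nat \<Rightarrow> real" where
  "Aa \<alpha> d s = (if s \<le> d then \<alpha>^(d-s) else 0)"

definition Kk :: "real \<Rightarrow> nat \<Rightarrow> nat \<Rightarrow> real" where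
  "Kk \<alpha> d e = (\<Sum>s\<le>d. Aa \<alpha> d s * Aa \<alpha> e s)"

definition Qq :: "real \<Rightarrow> real \<Rightarrow> nat \<Rightarrow> nat \<Rightarrow> real" where
  "Qq \<alpha> \<beta> s r = (if r \<le> s then \<beta>^(s-r) else \<alpha>^(r-s)) / (1 - \<alpha>*\<beta>)"

lemma Aa_nonneg: "0 \<le> \<alpha> \<Longrightarrow> 0 \<le> Aa \<alpha> d s"
  by (simp add: Aa_def)

lemma Kk_nonneg: "0 \<le> \<alpha> \<Longrightarrow> 0 \<le> Kk \<alpha> d e"
  by (simp add: Kk_def Aa_nonneg sum_nonneg)

lemma Qq_has_sum:
  assumes "0 \<le> \<alpha>" "0 \<le> \<beta>" "\<alpha>*\<beta> < 1"
  shows "((\<lambda>e. Aa \<alpha> e s * Aa \<beta> e r) has_sum Qq \<alpha> \<beta> s r) UNIV"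
proof (cases "r \<le> s")
  case True
  have eq: "Aa \<alpha> e s * Aa \<beta> e r = \<beta>^(s-r) * (if s \<le> e then (\<alpha>*\<beta>)^(e-s) else 0)" for e
  proof (cases "s \<le> e")
    case True
    then have "e - r = (e - s) + (s - r)" using \<open>r \<le> s\<close> by simp
    then have "\<beta>^(e-r) = \<beta>^(e-s) * \<beta>^(s-r)" by (metis power_add)
    then show ?thesis using True \<open>r \<le> s\<close>
      by (simp add: Aa_def power_add power_mult_distrib)
  qed (auto simp: Aa_def)
  have "((\<lambda>e. \<beta>^(s-r) * (if s \<le> e then (\<alpha>*\<beta>)^(e-s) else 0)) has_sum (\<beta>^(s-r) * (1/(1-\<alpha>*\<beta>)))) UNIV"
    by (rule has_sum_cmult_right, rule has_sum_geom_from) (use assms in auto)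
  then show ?thesis using True by (simp add: eq Qq_def)
next
  case False
  have eq: "Aa \<alpha> e s * Aa \<beta> e r = \<alpha>^(r-s) * (if r \<le> e then (\<alpha>*\<beta>)^(e-r) else 0)" for e
  proof (cases "r \<le> e")
    case True
    then have "e - s = (e - r) + (r - s)" using \<open>\<not> r \<le> s\<close> by simp
    then have "\<alpha>^(e-s) = \<alpha>^(e-r) * \<alpha>^(r-s)" by (metis power_add)
    then show ?thesis using True \<open>\<not> r \<le> s\<close>
      by (simp add: Aa_def power_add power_mult_distrib)
  qed (use False in \<open>auto simp: Aa_def\<close>)
  have "((\<lambda>e. \<alpha>^(r-s) * (if r \<le> e then (\<alpha>*\<beta>)^(e-r) else 0)) has_sum (\<alpha>^(r-s) * (1/(1-\<alpha>*\<beta>)))) UNIV"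
    by (rule has_sum_cmult_right, rule has_sum_geom_from) (use assms in auto)
  then show ?thesis using False by (simp add: eq Qq_def)
qed

lemma sum_rev_pow: "(\<Sum>t\<le>r. (q::real)^(r-t)) = (\<Sum>i\<le>r. q^i)"
  by (rule sum.reindex_bij_witness[where i="\<lambda>i. r - i" and j="\<lambda>t. r - t"]) auto

lemma alg_geo: "1 - (q::real) \<noteq> 0 \<Longrightarrow> X/(1-q) = X*((1 - q*Y)/(1-q)) + q/(1-q)*(X*Y)"
proof -
  have "X*((1-q*Y)/(1-q)) + q/(1-q)*(X*Y) = (X*(1-q*Y) + q*(X*Y))/(1-q)"
    by (simp add: add_divide_distrib)
  also have "X*(1-q*Y) + q*(X*Y) = X" by (simp add: algebra_simps)
  finally show ?thesis by simp
qed

lemma Qq_split: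
  assumes "\<alpha>*\<beta> < 1"
  shows "Qq \<alpha> \<beta> s r = (\<Sum>t\<le>s. Aa \<beta> s t * Aa \<alpha> r t) + \<alpha>*\<beta>/(1-\<alpha>*\<beta>) * (\<beta>^s * \<alpha>^r)"
proof -
  have ne: "1 - \<alpha>*\<beta> \<noteq> 0" using assms by simp
  show ?thesis
  proof (cases "r \<le> s")
    case True
    have "(\<Sum>t\<le>s. Aa \<beta> s t * Aa \<alpha> r t) = (\<Sum>t\<le>r. \<beta>^(s-r) * (\<alpha>*\<beta>)^(r-t))"
    proof -
      have "(\<Sum>t\<le>s. Aa \<beta> s t * Aa \<alpha> r t) = (\<Sum>t\<le>r. Aa \<beta> s t * Aa \<alpha> r t)"
        by (rule sum.mono_neutral_right) (use True in \<open>auto simp: Aa_def\<close>)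
      also have "\<dots> = (\<Sum>t\<le>r. \<beta>^(s-r) * (\<alpha>*\<beta>)^(r-t))"
      proof (rule sum.cong)
        fix t assume "t \<in> {..r}"
        then have "s - t = (s - r) + (r - t)" using True by simp
        then have "\<beta>^(s-t) = \<beta>^(s-r) * \<beta>^(r-t)" by (metis power_add)
        then show "Aa \<beta> s t * Aa \<alpha> r t = \<beta>^(s-r) * (\<alpha>*\<beta>)^(r-t)"
          using True \<open>t \<in> {..r}\<close> by (simp add: Aa_def power_add power_mult_distrib)
      qed simp
      finally show ?thesis .
    qed
    also have "\<dots> = \<beta>^(s-r) * (\<Sum>i\<le>r. (\<alpha>*\<beta>)^i)"
      by (simp add: sum_distrib_left[symmetric] sum_rev_pow)
    finally have S: "(\<Sum>t\<le>s. Aa \<beta> s t * Aa \<alpha> r t) = \<beta>^(s-r) * (\<Sum>i\<le>r. (\<alpha>*\<beta>)^i)" .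
    have G: "(\<Sum>i\<le>r. (\<alpha>*\<beta>)^i) = (1 - (\<alpha>*\<beta>)^Suc r) / (1 - \<alpha>*\<beta>)"
      using sum_gp_basic[of "\<alpha>*\<beta>" r] ne by (simp add: field_simps)
    have B: "\<beta>^s * \<alpha>^r = \<beta>^(s-r) * (\<alpha>*\<beta>)^r"
    proof -
      have "s = (s - r) + r" using True by simp
      then have "\<beta>^s = \<beta>^(s-r) * \<beta>^r" by (metis power_add)
      then show ?thesis by (simp add: power_mult_distrib)
    qed
    show ?thesis unfolding S G B Qq_def using True alg_geo[OF ne, of "\<beta>^(s-r)" "(\<alpha>*\<beta>)^r"]
      by simp
  next
    case False
    have "(\<Sum>t\<le>s. Aa \<beta> s t * Aa \<alpha> r t) = (\<Sum>t\<le>s. \<alpha>^(r-s) * (\<alpha>*\<beta>)^(s-t))"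
    proof (rule sum.cong)
      fix t assume "t \<in> {..s}"
      then have "r - t = (r - s) + (s - t)" using False by simp
      then have "\<alpha>^(r-t) = \<alpha>^(r-s) * \<alpha>^(s-t)" by (metis power_add)
      then show "Aa \<beta> s t * Aa \<alpha> r t = \<alpha>^(r-s) * (\<alpha>*\<beta>)^(s-t)"
        using False \<open>t \<in> {..s}\<close> by (simp add: Aa_def power_add power_mult_distrib)
    qed simp
    also have "\<dots> = \<alpha>^(r-s) * (\<Sum>i\<le>s. (\<alpha>*\<beta>)^i)"
      by (simp add: sum_distrib_left[symmetric] sum_rev_pow)
    finally have S: "(\<Sum>t\<le>s. Aa \<beta> s t * Aa \<alpha> r t) = \<alpha>^(r-s) * (\<Sum>i\<le>s. (\<alpha>*\<beta>)^i)" .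
    have G: "(\<Sum>i\<le>s. (\<alpha>*\<beta>)^i) = (1 - (\<alpha>*\<beta>)^Suc s) / (1 - \<alpha>*\<beta>)"
      using sum_gp_basic[of "\<alpha>*\<beta>" s] ne by (simp add: field_simps)
    have B: "\<beta>^s * \<alpha>^r = \<alpha>^(r-s) * (\<alpha>*\<beta>)^s"
    proof -
      have "r = (r - s) + s" using False by simp
      then have "\<alpha>^r = \<alpha>^(r-s) * \<alpha>^s" by (metis power_add)
      then show ?thesis by (simp add: power_mult_distrib)
    qed
    show ?thesis unfolding S G B Qq_def using False alg_geo[OF ne, of "\<alpha>^(r-s)" "(\<alpha>*\<beta>)^s"]
      by simp
  qed
qed



definition Bb :: "real \<Rightarrow> real \<Rightarrow> nat \<Rightarrow> nat \<Rightarrow> real" where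
  "Bb \<alpha> \<beta> d t = (\<Sum>s\<le>d. Aa \<alpha> d s * Aa \<beta> s t)"

definition hh :: "real \<Rightarrow> real \<Rightarrow> nat \<Rightarrow> real" where
  "hh \<alpha> \<beta> d = (\<Sum>s\<le>d. Aa \<alpha> d s * \<beta>^s)"

definition Mm :: "real \<Rightarrow> real \<Rightarrow> nat \<Rightarrow> nat \<Rightarrow> real" where
  "Mm \<alpha> \<beta> d f = (\<Sum>t\<le>d. Bb \<alpha> \<beta> d t * Bb \<beta> \<alpha> f t) + \<alpha>*\<beta>/(1-\<alpha>*\<beta>) * (hh \<alpha> \<beta> d * hh \<beta> \<alpha> f)"

lemma Bb_alt: "Bb \<alpha> \<beta> d t = (\<Sum>s\<in>{t..d}. \<alpha>^(d-s) * \<beta>^(s-t))"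
proof -
  have "Bb \<alpha> \<beta> d t = (\<Sum>s\<in>{t..d}. Aa \<alpha> d s * Aa \<beta> s t)"
    unfolding Bb_def by (rule sum.mono_neutral_right) (auto simp: Aa_def)
  also have "\<dots> = (\<Sum>s\<in>{t..d}. \<alpha>^(d-s) * \<beta>^(s-t))"
    by (rule sum.cong) (auto simp: Aa_def)
  finally show ?thesis .
qed

lemma Bb_sym: "Bb \<alpha> \<beta> d t = Bb \<beta> \<alpha> d t"
proof -
  have "(\<Sum>s\<in>{t..d}. \<alpha>^(d-s) * \<beta>^(s-t)) = (\<Sum>s\<in>{t..d}. \<beta>^(d-s) * \<alpha>^(s-t))"
    by (rule sum.reindex_bij_witness[where i="\<lambda>s. d + t - s" and j="\<lambda>s. d + t - s"])
       (auto simp: mult.commute)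
  then show ?thesis by (simp add: Bb_alt)
qed

lemma hh_alt: "hh \<alpha> \<beta> d = (\<Sum>s\<le>d. \<alpha>^(d-s) * \<beta>^s)"
  unfolding hh_def by (rule sum.cong) (auto simp: Aa_def)

lemma hh_sym: "hh \<alpha> \<beta> d = hh \<beta> \<alpha> d"
proof -
  have "(\<Sum>s\<le>d. \<alpha>^(d-s) * \<beta>^s) = (\<Sum>s\<le>d. \<beta>^(d-s) * \<alpha>^s)"
    by (rule sum.reindex_bij_witness[where i="\<lambda>s. d - s" and j="\<lambda>s. d - s"])
       (auto simp: mult.commute)
  then show ?thesis by (simp add: hh_alt)
qed

lemma Mm_sym: "Mm \<alpha> \<beta> d f = Mm \<beta> \<alpha> d f"
  unfolding Mm_def by (simp add: Bb_sym[of \<alpha> \<beta>] hh_sym[of \<alpha> \<beta>] mult.commute[of \<alpha> \<beta>])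

lemma Kk_range: "n \<ge> min d e \<Longrightarrow> Kk \<alpha> d e = (\<Sum>s\<le>n. Aa \<alpha> d s * Aa \<alpha> e s)"
proof -
  assume n: "n \<ge> min d e"
  have "Kk \<alpha> d e = (\<Sum>s\<le>min d e. Aa \<alpha> d s * Aa \<alpha> e s)"
    unfolding Kk_def by (rule sum.mono_neutral_right) (auto simp: Aa_def)
  also have "\<dots> = (\<Sum>s\<le>n. Aa \<alpha> d s * Aa \<alpha> e s)"
    by (rule sum.mono_neutral_left) (use n in \<open>auto simp: Aa_def\<close>)
  finally show ?thesis .
qed

lemma Kk_sym: "Kk \<alpha> d e = Kk \<alpha> e d"
  using Kk_range[where n=d and d=d and e=e and \<alpha>=\<alpha>] Kk_range[where n=d and d=e and e=d and \<alpha>=\<alpha>]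
  by (simp add: mult.commute)

lemma Kprod_sum:
  assumes "\<alpha>*\<beta> < 1"
  shows "(\<Sum>s\<le>d. \<Sum>r\<le>f. (Aa \<alpha> d s * Aa \<beta> f r) * Qq \<alpha> \<beta> s r) = Mm \<alpha> \<beta> d f"
proof -
  define c where "c = \<alpha>*\<beta>/(1-\<alpha>*\<beta>)"
  have "(\<Sum>s\<le>d. \<Sum>r\<le>f. (Aa \<alpha> d s * Aa \<beta> f r) * Qq \<alpha> \<beta> s r)
      = (\<Sum>s\<le>d. \<Sum>r\<le>f. (Aa \<alpha> d s * Aa \<beta> f r) * (\<Sum>t\<le>d. Aa \<beta> s t * Aa \<alpha> r t))
        + (\<Sum>s\<le>d. \<Sum>r\<le>f. c * ((Aa \<alpha> d s * \<beta>^s) * (Aa \<beta> f r * \<alpha>^r)))"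
  proof -
    have "(Aa \<alpha> d s * Aa \<beta> f r) * Qq \<alpha> \<beta> s r
        = (Aa \<alpha> d s * Aa \<beta> f r) * (\<Sum>t\<le>d. Aa \<beta> s t * Aa \<alpha> r t)
          + c * ((Aa \<alpha> d s * \<beta>^s) * (Aa \<beta> f r * \<alpha>^r))" if "s \<le> d" for s r
    proof -
      have "(\<Sum>t\<le>s. Aa \<beta> s t * Aa \<alpha> r t) = (\<Sum>t\<le>d. Aa \<beta> s t * Aa \<alpha> r t)"
        by (rule sum.mono_neutral_left) (use that in \<open>auto simp: Aa_def\<close>)
      then show ?thesis
        unfolding Qq_split[OF assms, of s r] c_def by (simp add: algebra_simps)
    qed
    then show ?thesis by (simp add: sum.distrib)
  qed
  also have "(\<Sum>s\<le>d. \<Sum>r\<le>f. c * ((Aa \<alpha> d s * \<beta>^s) * (Aa \<beta> f r * \<alpha>^r))) = c * (hh \<alpha> \<beta> d * hh \<beta> \<alpha> f)"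
  proof -
    have "c * (hh \<alpha> \<beta> d * hh \<beta> \<alpha> f) = c * (\<Sum>s\<le>d. \<Sum>r\<le>f. (Aa \<alpha> d s * \<beta>^s) * (Aa \<beta> f r * \<alpha>^r))"
      by (simp add: hh_def sum_product)
    also have "\<dots> = (\<Sum>s\<le>d. \<Sum>r\<le>f. c * ((Aa \<alpha> d s * \<beta>^s) * (Aa \<beta> f r * \<alpha>^r)))"
      by (simp add: sum_distrib_left)
    finally show ?thesis by simp
  qed
  also have "(\<Sum>s\<le>d. \<Sum>r\<le>f. (Aa \<alpha> d s * Aa \<beta> f r) * (\<Sum>t\<le>d. Aa \<beta> s t * Aa \<alpha> r t))
      = (\<Sum>t\<le>d. Bb \<alpha> \<beta> d t * Bb \<beta> \<alpha> f t)"
  proof -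
    have "(\<Sum>t\<le>d. Bb \<alpha> \<beta> d t * Bb \<beta> \<alpha> f t)
        = (\<Sum>t\<le>d. \<Sum>s\<le>d. \<Sum>r\<le>f. (Aa \<alpha> d s * Aa \<beta> s t) * (Aa \<beta> f r * Aa \<alpha> r t))"
      by (simp add: Bb_def sum_product)
    also have "\<dots> = (\<Sum>s\<le>d. \<Sum>t\<le>d. \<Sum>r\<le>f. (Aa \<alpha> d s * Aa \<beta> s t) * (Aa \<beta> f r * Aa \<alpha> r t))"
      by (rule sum.swap)
    also have "\<dots> = (\<Sum>s\<le>d. \<Sum>r\<le>f. \<Sum>t\<le>d. (Aa \<alpha> d s * Aa \<beta> s t) * (Aa \<beta> f r * Aa \<alpha> r t))"
      by (rule sum.cong[OF refl], rule sum.swap)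
    also have "\<dots> = (\<Sum>s\<le>d. \<Sum>r\<le>f. (Aa \<alpha> d s * Aa \<beta> f r) * (\<Sum>t\<le>d. Aa \<beta> s t * Aa \<alpha> r t))"
      by (simp add: sum_distrib_left algebra_simps)
    finally show ?thesis by simp
  qed
  finally show ?thesis unfolding Mm_def c_def .
qed

lemma Kprod_has_sum:
  assumes "0 \<le> \<alpha>" "0 \<le> \<beta>" "\<alpha>*\<beta> < 1"
  shows "((\<lambda>e. Kk \<alpha> d e * Kk \<beta> e f) has_sum Mm \<alpha> \<beta> d f) UNIV"
proof -
  have eq: "Kk \<alpha> d e * Kk \<beta> e f = (\<Sum>s\<le>d. \<Sum>r\<le>f. (Aa \<alpha> d s * Aa \<beta> f r) * (Aa \<alpha> e s * Aa \<beta> e r))" for e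
  proof -
    have "Kk \<beta> e f = (\<Sum>r\<le>f. Aa \<beta> e r * Aa \<beta> f r)" by (rule Kk_range) simp
    then show ?thesis unfolding Kk_def by (simp add: sum_product algebra_simps)
  qed
  have "((\<lambda>e. \<Sum>s\<le>d. \<Sum>r\<le>f. (Aa \<alpha> d s * Aa \<beta> f r) * (Aa \<alpha> e s * Aa \<beta> e r))
        has_sum (\<Sum>s\<le>d. \<Sum>r\<le>f. (Aa \<alpha> d s * Aa \<beta> f r) * Qq \<alpha> \<beta> s r)) UNIV"
    by (intro has_sum_sum_fin finite_atMost has_sum_cmult_right Qq_has_sum assms)
  then show ?thesis unfolding eq Kprod_sum[OF assms(3)] .
qed



definition good :: "real \<Rightarrow> (nat \<Rightarrow> real) \<Rightarrow> bool" where
  "good \<rho> v \<longleftrightarrow> (\<forall>d. 0 \<le> v d) \<and> (\<exists>C. \<forall>d. v d \<le> C * \<rho>^d)"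

definition Kop :: "real \<Rightarrow> (nat \<Rightarrow> real) \<Rightarrow> nat \<Rightarrow> real" where
  "Kop \<alpha> v d = infsum (\<lambda>e. Kk \<alpha> d e * v e) UNIV"

lemma fubini_swap:
  fixes F :: "'a \<times> 'b \<Rightarrow> real"
  assumes nn: "\<And>x y. F (x,y) \<ge> 0"
    and inner1: "\<And>x. ((\<lambda>y. F (x,y)) has_sum g x) UNIV"
    and outer1: "(g has_sum S) UNIV"
    and inner2: "\<And>y. ((\<lambda>x. F (x,y)) has_sum h y) UNIV"
  shows "(h has_sum S) UNIV"
proof -
  have "(F has_sum S) (UNIV \<times> UNIV)"
    using tonelli_R[of UNIV "\<lambda>_. UNIV" F g S] nn inner1 outer1 by auto
  then have "((\<lambda>(y,x). F (x,y)) has_sum S) (UNIV \<times> UNIV)"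
    by (subst (asm) has_sum_swap) simp
  then show ?thesis
    by (rule has_sum_SigmaD) (use inner2 in auto)
qed

lemma geo_sum_le: "0 \<le> (q::real) \<Longrightarrow> q < 1 \<Longrightarrow> (\<Sum>i\<le>d. q^i) \<le> 1/(1-q)"
proof -
  assume q: "0 \<le> q" "q < 1"
  have "(1 - q) * (\<Sum>i\<le>d. q^i) = 1 - q^Suc d" by (rule sum_gp_basic)
  also have "\<dots> \<le> 1" using q by simp
  finally show ?thesis using q by (simp add: field_simps)
qed

lemma hh_bound:
  assumes "0 \<le> \<alpha>" "\<alpha> < \<rho>"
  shows "hh \<alpha> \<rho> d \<le> \<rho>^d / (1 - \<alpha>/\<rho>)"
proof -
  have rho: "\<rho> > 0" using assms by simp
  have "hh \<alpha> \<rho> d = (\<Sum>s\<le>d. \<rho>^d * (\<alpha>/\<rho>)^(d-s))"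
    unfolding hh_alt
  proof (rule sum.cong)
    fix s assume "s \<in> {..d}"
    then have "d = (d - s) + s" by simp
    then have "\<rho>^d = \<rho>^(d-s) * \<rho>^s" by (metis power_add)
    then show "\<alpha>^(d-s) * \<rho>^s = \<rho>^d * (\<alpha>/\<rho>)^(d-s)"
      using rho by (simp add: power_divide)
  qed simp
  also have "\<dots> = \<rho>^d * (\<Sum>i\<le>d. (\<alpha>/\<rho>)^i)"
    by (simp add: sum_distrib_left[symmetric] sum_rev_pow)
  also have "\<dots> \<le> \<rho>^d * (1/(1-\<alpha>/\<rho>))"
    by (rule mult_left_mono, rule geo_sum_le) (use assms rho in auto)
  finally show ?thesis by simp
qed

lemma Kk_geo_has_sum:
  assumes "0 \<le> \<alpha>" "\<alpha> < \<rho>" "\<alpha>*\<rho> < 1"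
  shows "((\<lambda>e. Kk \<alpha> d e * \<rho>^e) has_sum (hh \<alpha> \<rho> d / (1-\<alpha>*\<rho>))) UNIV"
proof -
  have rho: "\<rho> > 0" using assms by simp
  define F where "F = (\<lambda>(s,e). Aa \<alpha> d s * (Aa \<alpha> e s * \<rho>^e))"
  have inner1: "((\<lambda>e. F (s,e)) has_sum (Aa \<alpha> d s * (\<rho>^s / (1-\<alpha>*\<rho>)))) UNIV" for s
  proof -
    have eq: "Aa \<alpha> e s * \<rho>^e = \<rho>^s * (if s \<le> e then (\<alpha>*\<rho>)^(e-s) else 0)" for e
    proof (cases "s \<le> e")
      case True
      then have "e = (e - s) + s" by simp
      then have "\<rho>^e = \<rho>^(e-s) * \<rho>^s" by (metis power_add)
      then show ?thesis using True by (simp add: Aa_def power_mult_distrib)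
    qed (auto simp: Aa_def)
    have "((\<lambda>e. \<rho>^s * (if s \<le> e then (\<alpha>*\<rho>)^(e-s) else 0)) has_sum (\<rho>^s * (1/(1-\<alpha>*\<rho>)))) UNIV"
      by (rule has_sum_cmult_right, rule has_sum_geom_from) (use assms rho in auto)
    from has_sum_cmult_right[OF this, of "Aa \<alpha> d s"]
    show ?thesis unfolding F_def by (simp add: eq)
  qed
  have outer1: "((\<lambda>s. Aa \<alpha> d s * (\<rho>^s / (1-\<alpha>*\<rho>))) has_sum (hh \<alpha> \<rho> d / (1-\<alpha>*\<rho>))) UNIV"
    by (rule has_sum_finite_neutralI[where B="{..d}"])
       (auto simp: Aa_def hh_def sum_divide_distrib)
  have inner2: "((\<lambda>s. F (s,e)) has_sum (Kk \<alpha> d e * \<rho>^e)) UNIV" for e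
    by (rule has_sum_finite_neutralI[where B="{..d}"])
       (auto simp: F_def Aa_def Kk_def sum_distrib_right mult.assoc)
  show ?thesis
    by (rule fubini_swap[OF _ inner1 outer1 inner2])
       (use assms in \<open>auto simp: F_def Aa_nonneg\<close>)
qed



lemma Kop_props:
  assumes "0 \<le> \<alpha>" "\<alpha> < \<rho>" "\<alpha>*\<rho> < 1" "good \<rho> v"
  shows "((\<lambda>e. Kk \<alpha> d e * v e) has_sum Kop \<alpha> v d) UNIV" "good \<rho> (Kop \<alpha> v)"
proof -
  have rho: "\<rho> > 0" using assms by simp
  obtain C where C: "\<And>d. v d \<le> C * \<rho>^d" and vnn: "\<And>d. 0 \<le> v d"
    using assms(4) unfolding good_def by blast
  have C0: "C \<ge> 0" using C[of 0] vnn[of 0] by simp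
  have geo: "((\<lambda>e. Kk \<alpha> d e * \<rho>^e) has_sum (hh \<alpha> \<rho> d / (1-\<alpha>*\<rho>))) UNIV" for d
    by (rule Kk_geo_has_sum) (use assms in auto)
  have geoC: "((\<lambda>e. C * (Kk \<alpha> d e * \<rho>^e)) has_sum (C * (hh \<alpha> \<rho> d / (1-\<alpha>*\<rho>)))) UNIV" for d
    by (rule has_sum_cmult_right[OF geo])
  have le: "Kk \<alpha> d e * v e \<le> C * (Kk \<alpha> d e * \<rho>^e)" for d e
    using mult_left_mono[OF C[of e] Kk_nonneg[OF assms(1), of d e]] by (simp add: algebra_simps)
  have nn: "0 \<le> Kk \<alpha> d e * v e" for d e
    using Kk_nonneg[OF assms(1)] vnn by simp
  have summ: "(\<lambda>e. Kk \<alpha> d e * v e) summable_on UNIV" for d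
    by (rule summable_on_comparison_test[OF has_sum_imp_summable[OF geoC]]) (use le nn in auto)
  show hs: "((\<lambda>e. Kk \<alpha> d e * v e) has_sum Kop \<alpha> v d) UNIV" for d
    using summ[of d] unfolding Kop_def by (simp add: summable_iff_has_sum_infsum)
  have bound: "Kop \<alpha> v d \<le> (C / ((1-\<alpha>*\<rho>) * (1 - \<alpha>/\<rho>))) * \<rho>^d" for d
  proof -
    have "Kop \<alpha> v d \<le> C * (hh \<alpha> \<rho> d / (1-\<alpha>*\<rho>))"
      by (rule has_sum_mono[OF hs geoC]) (use le in auto)
    also have "\<dots> \<le> C * ((\<rho>^d / (1 - \<alpha>/\<rho>)) / (1-\<alpha>*\<rho>))"
      by (intro mult_left_mono divide_right_mono hh_bound) (use assms C0 in auto)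
    also have "\<dots> = (C / ((1-\<alpha>*\<rho>) * (1 - \<alpha>/\<rho>))) * \<rho>^d"
      by (simp add: field_simps)
    finally show ?thesis .
  qed
  have "0 \<le> Kop \<alpha> v d" for d
    by (rule has_sum_nonneg[OF hs]) (use nn in auto)
  then show "good \<rho> (Kop \<alpha> v)" unfolding good_def using bound by blast
qed

lemma Kop_comm_aux:
  assumes "0 \<le> \<alpha>" "\<alpha> < \<rho>" "\<alpha>*\<rho> < 1" "0 \<le> \<beta>" "\<beta> < \<rho>" "\<beta>*\<rho> < 1" "\<alpha>*\<beta> < 1"
    and "good \<rho> v"
  shows "((\<lambda>f. Mm \<alpha> \<beta> d f * v f) has_sum Kop \<alpha> (Kop \<beta> v) d) UNIV"
proof -
  have vnn: "\<And>d. 0 \<le> v d" using assms(8) unfolding good_def by blast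
  have g2: "good \<rho> (Kop \<beta> v)" using Kop_props(2)[OF assms(4-6,8)] .
  define F where "F = (\<lambda>(e,f). Kk \<alpha> d e * (Kk \<beta> e f * v f))"
  have inner1: "((\<lambda>f. F (e,f)) has_sum (Kk \<alpha> d e * Kop \<beta> v e)) UNIV" for e
    unfolding F_def using has_sum_cmult_right[OF Kop_props(1)[OF assms(4-6,8)]] by simp
  have outer1: "((\<lambda>e. Kk \<alpha> d e * Kop \<beta> v e) has_sum Kop \<alpha> (Kop \<beta> v) d) UNIV"
    using Kop_props(1)[OF assms(1-3) g2] .
  have inner2: "((\<lambda>e. F (e,f)) has_sum (Mm \<alpha> \<beta> d f * v f)) UNIV" for f
    unfolding F_def using has_sum_cmult_left[OF Kprod_has_sum[OF assms(1,4,7)], of d f "v f"]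
    by (simp add: mult.assoc)
  show ?thesis
    by (rule fubini_swap[OF _ inner1 outer1 inner2])
       (use assms vnn in \<open>auto simp: F_def Kk_nonneg\<close>)
qed

lemma Kop_comm:
  assumes "0 \<le> \<alpha>" "\<alpha> < \<rho>" "\<alpha>*\<rho> < 1" "0 \<le> \<beta>" "\<beta> < \<rho>" "\<beta>*\<rho> < 1" "\<alpha>*\<beta> < 1"
    and "good \<rho> v"
  shows "Kop \<alpha> (Kop \<beta> v) = Kop \<beta> (Kop \<alpha> v)"
proof
  fix d
  have "\<beta>*\<alpha> < 1" using assms(7) by (simp add: mult.commute)
  have h1: "((\<lambda>f. Mm \<alpha> \<beta> d f * v f) has_sum Kop \<alpha> (Kop \<beta> v) d) UNIV"
    by (rule Kop_comm_aux) (use assms in auto)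
  have h2: "((\<lambda>f. Mm \<beta> \<alpha> d f * v f) has_sum Kop \<beta> (Kop \<alpha> v) d) UNIV"
    by (rule Kop_comm_aux) (use assms \<open>\<beta>*\<alpha> < 1\<close> in auto)
  show "Kop \<alpha> (Kop \<beta> v) d = Kop \<beta> (Kop \<alpha> v) d"
  proof -
    have "(\<lambda>f. Mm \<beta> \<alpha> d f * v f) = (\<lambda>f. Mm \<alpha> \<beta> d f * v f)"
      using Mm_sym[of \<beta> \<alpha> d] by simp
    then show ?thesis using has_sum_unique[OF h1] h2 by simp
  qed
qed



fun vec :: "real \<Rightarrow> real list \<Rightarrow> nat \<Rightarrow> real" where
  "vec y [] = (\<lambda>d. y^d)"
| "vec y (l # ls) = Kop l (vec y ls)"

definition labs_ok :: "real set \<Rightarrow> real \<Rightarrow> real \<Rightarrow> bool" where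
  "labs_ok L \<rho> y \<longleftrightarrow> (\<forall>\<alpha>\<in>L. 0 \<le> \<alpha> \<and> \<alpha> < \<rho> \<and> \<alpha>*\<rho> < 1) \<and> (\<forall>\<alpha>\<in>L. \<forall>\<beta>\<in>L. \<alpha>*\<beta> < 1)
     \<and> 0 \<le> y \<and> y \<le> \<rho>"

lemma vec_good: "labs_ok L \<rho> y \<Longrightarrow> set ls \<subseteq> L \<Longrightarrow> good \<rho> (vec y ls)"
proof (induction ls)
  case Nil
  have "y^d \<le> 1 * \<rho>^d" for d using Nil by (simp add: labs_ok_def power_mono)
  then show ?case using Nil unfolding good_def labs_ok_def by (metis vec.simps(1) zero_le_power)
next
  case (Cons l ls)
  then show ?case by (auto simp: labs_ok_def intro!: Kop_props(2))
qed

lemma vec_swap: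
  assumes "labs_ok L \<rho> y" "\<alpha> \<in> L" "\<beta> \<in> L" "set ys \<subseteq> L"
  shows "vec y (\<alpha> # \<beta> # ys) = vec y (\<beta> # \<alpha> # ys)"
  using assms vec_good[OF assms(1,4)] by (auto simp: labs_ok_def intro!: Kop_comm)

lemma vec_front:
  assumes "labs_ok L \<rho> y" "set (xs @ x # zs) \<subseteq> L"
  shows "vec y (xs @ x # zs) = vec y (x # xs @ zs)"
  using assms(2)
proof (induction xs)
  case Nil then show ?case by simp
next
  case (Cons z xs)
  then have "vec y (z # xs @ x # zs) = Kop z (vec y (x # xs @ zs))" by simp
  also have "\<dots> = vec y (z # x # xs @ zs)" by simp
  also have "\<dots> = vec y (x # z # xs @ zs)"
    by (rule vec_swap[OF assms(1)]) (use Cons.prems in auto)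
  finally show ?case by simp
qed

lemma vec_perm:
  assumes "labs_ok L \<rho> y"
  shows "mset xs = mset ys \<Longrightarrow> set xs \<subseteq> L \<Longrightarrow> vec y xs = vec y ys"
proof (induction xs arbitrary: ys)
  case Nil then show ?case by simp
next
  case (Cons x xs)
  have "x \<in> set ys" using Cons.prems(1) by (metis list.set_intros(1) set_mset_mset)
  then obtain ys1 ys2 where ys: "ys = ys1 @ x # ys2" by (meson split_list)
  have sy: "set ys = set (x # xs)" using Cons.prems(1) by (metis set_mset_mset)
  have "vec y ys = vec y (x # ys1 @ ys2)"
    unfolding ys by (rule vec_front[OF assms]) (use sy Cons.prems(2) ys in auto)
  also have "mset xs = mset (ys1 @ ys2)" using Cons.prems(1) ys by simp
  then have "vec y xs = vec y (ys1 @ ys2)" using Cons.IH Cons.prems(2) by simp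
  then have "vec y (x # ys1 @ ys2) = vec y (x # xs)" by simp
  finally show ?case by simp
qed



definition Eu :: "real \<Rightarrow> int \<times> int \<Rightarrow> int \<times> int \<Rightarrow> real" where
  "Eu l U W = (l powi (fst U - fst W) * ind (fst U \<ge> fst W)) * (l powi (snd U - snd W) * ind (snd U \<ge> snd W))
               * ind (fst W \<ge> snd U)"

definition Ew :: "bool \<Rightarrow> real \<Rightarrow> int \<times> int \<Rightarrow> int \<times> int \<Rightarrow> real" where
  "Ew h l x z = (if h then Eu l z x else Eu l x z)"

lemma ind_simps[simp]: "ind True = 1" "ind False = 0" by (simp_all add: ind_def)

lemma ind_nonneg: "0 \<le> ind b" by (simp add: ind_def)

lemma Ew_nonneg: "0 < l \<Longrightarrow> 0 \<le> Ew h l x z"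
  by (simp add: Ew_def Eu_def ind_nonneg)

lemma Ew_nz: "Ew h l x z \<noteq> 0 \<Longrightarrow> fst x \<ge> snd x \<and> fst z \<ge> snd z"
  by (cases h) (auto simp: Ew_def Eu_def ind_def split: if_splits)

lemma one_step_core:
  fixes g :: "int \<times> int \<Rightarrow> real" and \<phi> :: "nat \<times> nat \<Rightarrow> int \<times> int"
  assumes D: "D = {(s,e). s \<le> d \<and> s \<le> e}"
    and inj: "inj_on \<phi> D"
    and zero: "\<And>z. z \<notin> \<phi> ` D \<Longrightarrow> g z = 0"
    and val: "\<And>s e. (s,e) \<in> D \<Longrightarrow> g (\<phi> (s,e)) = Aa l d s * Aa l e s * v e"
    and l: "0 \<le> l" and vnn: "\<And>e. 0 \<le> v e"
    and hs: "((\<lambda>e. Kk l d e * v e) has_sum S) UNIV"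
  shows "(g has_sum S) UNIV"
proof -
  define F where "F = (\<lambda>(e,s). Aa l d s * Aa l e s * v e)"
  have inner: "((\<lambda>s. F (e,s)) has_sum (Kk l d e * v e)) UNIV" for e
    by (rule has_sum_finite_neutralI[where B="{..d}"])
       (auto simp: F_def Aa_def Kk_def sum_distrib_right)
  have "(F has_sum S) (UNIV \<times> UNIV)"
    using tonelli_R[of UNIV "\<lambda>_. UNIV" F "\<lambda>e. Kk l d e * v e" S] inner hs l vnn
    by (auto simp: F_def Aa_nonneg)
  then have "((\<lambda>(s,e). F (e,s)) has_sum S) (UNIV \<times> UNIV)"
    by (subst (asm) has_sum_swap) simp
  then have "((\<lambda>(s,e). Aa l d s * Aa l e s * v e) has_sum S) UNIV"
    by (simp add: F_def case_prod_unfold)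
  then have "((\<lambda>(s,e). Aa l d s * Aa l e s * v e) has_sum S) D"
    by (subst has_sum_cong_neutral[where T=UNIV]) (auto simp: D Aa_def split: if_splits)
  then have "((g \<circ> \<phi>) has_sum S) D"
    by (subst has_sum_cong[where g="\<lambda>(s,e). Aa l d s * Aa l e s * v e"]) (auto simp: val)
  then have "(g has_sum S) (\<phi> ` D)"
    by (subst has_sum_reindex[OF inj])
  then show ?thesis
    by (subst (asm) has_sum_cong_neutral[where T=UNIV]) (auto simp: zero)
qed

lemma powi_nat: "(l::real) powi (int n) = l ^ n"
  by (simp add: power_int_of_nat)

lemma one_step:
  assumes l: "0 < l" and gap: "snd x \<le> fst x" and vnn: "\<And>e. 0 \<le> v e"
    and hs: "((\<lambda>e. Kk l (nat (fst x - snd x)) e * v e) has_sum S) UNIV"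
  shows "((\<lambda>z. Ew h l x z * v (nat (fst z - snd z))) has_sum S) UNIV"
proof -
  define d where "d = nat (fst x - snd x)"
  define D where "D = {(s,e). s \<le> d \<and> s \<le> e}"
  obtain x1 x2 where x: "x = (x1, x2)" by fastforce
  show ?thesis
  proof (cases h)
    case True
    define \<phi> where "\<phi> = (\<lambda>(s::nat,e::nat). (x1 - int s + int e, x1 - int s))"
    show ?thesis
    proof (rule one_step_core[where \<phi>=\<phi> and D=D and d=d])
      show "inj_on \<phi> D" unfolding inj_on_def \<phi>_def by auto
      show "Ew h l x z * v (nat (fst z - snd z)) = 0" if "z \<notin> \<phi> ` D" for z
      proof (rule ccontr)
        assume nz: "Ew h l x z * v (nat (fst z - snd z)) \<noteq> 0"
        obtain z1 z2 where z: "z = (z1,z2)" by fastforce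
        have c: "z1 \<ge> x1" "x1 \<ge> z2" "z2 \<ge> x2"
          using nz True by (auto simp: Ew_def Eu_def ind_def x z split: if_splits)
        have "z = \<phi> (nat (x1 - z2), nat (z1 - z2))" using c by (simp add: \<phi>_def z)
        moreover have "(nat (x1 - z2), nat (z1 - z2)) \<in> D" using c by (auto simp: D_def d_def x)
        ultimately show False using that by blast
      qed
      show "Ew h l x (\<phi> (s, e)) * v (nat (fst (\<phi> (s, e)) - snd (\<phi> (s, e)))) = Aa l d s * Aa l e s * v e"
        if "(s,e) \<in> D" for s e
      proof -
        have se: "s \<le> d" "s \<le> e" using that by (auto simp: D_def)
        have d': "int d = x1 - x2" using gap by (simp add: d_def x)
        have p1: "l powi (int e - int s) = l^(e-s)" using se by (simp add: powi_nat[symmetric] of_nat_diff)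
        have p2: "l powi (x1 - x2 - int s) = l^(d-s)" using se d' by (simp add: powi_nat[symmetric] of_nat_diff)
        have p3: "l powi (x1 - int s - x2) = l^(d-s)" using p2 by (simp add: algebra_simps)
        show ?thesis using True se d'
          by (simp add: Ew_def Eu_def \<phi>_def x p1 p2 p3 Aa_def)
      qed
    qed (use assms in \<open>auto simp: D_def d_def\<close>)
  next
    case False
    define \<phi> where "\<phi> = (\<lambda>(s::nat,e::nat). (x2 + int s, x2 + int s - int e))"
    show ?thesis
    proof (rule one_step_core[where \<phi>=\<phi> and D=D and d=d])
      show "inj_on \<phi> D" unfolding inj_on_def \<phi>_def by auto
      show "Ew h l x z * v (nat (fst z - snd z)) = 0" if "z \<notin> \<phi> ` D" for z
      proof (rule ccontr)
        assume nz: "Ew h l x z * v (nat (fst z - snd z)) \<noteq> 0"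
        obtain z1 z2 where z: "z = (z1,z2)" by fastforce
        have c: "x1 \<ge> z1" "z1 \<ge> x2" "x2 \<ge> z2"
          using nz False by (auto simp: Ew_def Eu_def ind_def x z split: if_splits)
        have "z = \<phi> (nat (z1 - x2), nat (z1 - z2))" using c by (simp add: \<phi>_def z)
        moreover have "(nat (z1 - x2), nat (z1 - z2)) \<in> D" using c by (auto simp: D_def d_def x)
        ultimately show False using that by blast
      qed
      show "Ew h l x (\<phi> (s, e)) * v (nat (fst (\<phi> (s, e)) - snd (\<phi> (s, e)))) = Aa l d s * Aa l e s * v e"
        if "(s,e) \<in> D" for s e
      proof -
        have se: "s \<le> d" "s \<le> e" using that by (auto simp: D_def)
        have d': "int d = x1 - x2" using gap by (simp add: d_def x)
        have p1: "l powi (int e - int s) = l^(e-s)" using se by (simp add: powi_nat[symmetric] of_nat_diff)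
        have p2: "l powi (x1 - x2 - int s) = l^(d-s)" using se d' by (simp add: powi_nat[symmetric] of_nat_diff)
        have p3: "l powi (x1 - (x2 + int s)) = l^(d-s)" using p2 by (simp add: algebra_simps)
        have p4: "l powi (x2 - (x2 + int s - int e)) = l^(e-s)" using p1 by (simp add: algebra_simps)
        show ?thesis using False se d'
          by (simp add: Ew_def Eu_def \<phi>_def x p1 p2 p3 p4 Aa_def mult_ac)
      qed
    qed (use assms in \<open>auto simp: D_def d_def\<close>)
  qed
qed



fun chainw :: "real \<Rightarrow> (bool \<times> real) list \<Rightarrow> int \<times> int \<Rightarrow> (int \<times> int) list \<Rightarrow> real" where
  "chainw y [] x Ls = y powi (fst x - snd x)"
| "chainw y (e # es) x Ls = Ew (fst e) (snd e) x (hd Ls) * chainw y es (hd Ls) (tl Ls)"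

lemma chainw_nonneg: "0 < y \<Longrightarrow> \<forall>e\<in>set es. 0 < snd e \<Longrightarrow> 0 \<le> chainw y es x Ls"
proof (induction es arbitrary: x Ls)
  case Nil then show ?case by simp
next
  case (Cons e es)
  have "0 \<le> chainw y es (hd Ls) (tl Ls)" using Cons by simp
  then show ?case using Cons.prems by (simp add: Ew_nonneg)
qed

lemma chain_has_sum:
  assumes ok: "labs_ok L \<rho> y" and y: "0 < y"
  shows "set (map snd es) \<subseteq> L \<Longrightarrow> \<forall>e\<in>set es. 0 < snd e \<Longrightarrow> snd x \<le> fst x \<Longrightarrow>
    (chainw y es x has_sum vec y (map snd es) (nat (fst x - snd x))) {Ls. length Ls = length es}"
proof (induction es arbitrary: x)
  case Nil
  have "{Ls::(int\<times>int) list. length Ls = 0} = {[]}" by auto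
  moreover have "y powi (fst x - snd x) = y ^ nat (fst x - snd x)"
    using Nil.prems(3) by (simp add: powi_nat[symmetric])
  ultimately show ?case by (simp add: has_sum_finiteI)
next
  case (Cons e es)
  obtain h l where e: "e = (h, l)" by fastforce
  have l: "0 < l" "l \<in> L" using Cons.prems e by auto
  have Les: "set (map snd es) \<subseteq> L" "\<forall>e\<in>set es. 0 < snd e" using Cons.prems by auto
  define T where "T = {Ls::(int\<times>int) list. length Ls = length es}"
  define V where "V = vec y (map snd es)"
  have gV: "good \<rho> V" unfolding V_def by (rule vec_good[OF ok Les(1)])
  have lr: "l < \<rho>" "l * \<rho> < 1" using ok l unfolding labs_ok_def by auto
  define G where "G = (\<lambda>(z, Ls). Ew h l x z * chainw y es z Ls)"
  have inner: "((\<lambda>Ls. G (z, Ls)) has_sum (Ew h l x z * V (nat (fst z - snd z)))) T" for z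
  proof (cases "Ew h l x z = 0")
    case True then show ?thesis by (simp add: G_def)
  next
    case False
    then have "snd z \<le> fst z" using Ew_nz by blast
    from has_sum_cmult_right[OF Cons.IH[OF Les this], of "Ew h l x z"]
    show ?thesis by (simp add: G_def T_def V_def)
  qed
  have outer: "((\<lambda>z. Ew h l x z * V (nat (fst z - snd z))) has_sum Kop l V (nat (fst x - snd x))) UNIV"
    by (rule one_step[OF l(1) Cons.prems(3)])
       (use gV Kop_props(1)[OF less_imp_le[OF l(1)] lr gV] in \<open>auto simp: good_def\<close>)
  have "(G has_sum Kop l V (nat (fst x - snd x))) (UNIV \<times> T)"
    using tonelli_R[of UNIV "\<lambda>_. T" G, OF _ inner outer] l(1) y Les(2)
    by (auto simp: G_def intro!: mult_nonneg_nonneg Ew_nonneg chainw_nonneg)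
  also have "?this \<longleftrightarrow> (chainw y (e # es) x has_sum Kop l V (nat (fst x - snd x))) {Ls. length Ls = length (e # es)}"
    by (rule has_sum_reindex_bij_witness[where j="\<lambda>(z, Ls). z # Ls" and i="\<lambda>Ls. (hd Ls, tl Ls)"])
       (auto simp: T_def G_def e length_Suc_conv)
  finally show ?case by (simp add: e V_def del: chainw.simps)
qed



lemma chainw_prod:
  "chainw y (map (\<lambda>j. (H j, Lb j)) [m+1..<m+n+1]) (lv m) (map lv [m+1..<m+n+1])
   = (\<Prod>j\<in>{m+1..m+n}. Ew (H j) (Lb j) (lv (j-1)) (lv j)) * y powi (fst (lv (m+n)) - snd (lv (m+n)))"
proof (induction n arbitrary: m)
  case 0 then show ?case by simp
next
  case (Suc n)
  have u: "[m+1..<m+Suc n+1] = (m+1) # [(m+1)+1..<(m+1)+n+1]" by (simp add: upt_conv_Cons)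
  have p: "(\<Prod>j\<in>{m+1..m+Suc n}. Ew (H j) (Lb j) (lv (j-1)) (lv j))
         = Ew (H (m+1)) (Lb (m+1)) (lv m) (lv (m+1)) * (\<Prod>j\<in>{(m+1)+1..(m+1)+n}. Ew (H j) (Lb j) (lv (j-1)) (lv j))"
    by (subst prod.atLeast_Suc_atMost) auto
  show ?case unfolding u p using Suc.IH[of "m+1"] by simp
qed

definition esp :: "nat \<Rightarrow> (int \<Rightarrow> real) \<Rightarrow> (nat \<Rightarrow> int \<times> int) \<Rightarrow> (bool \<times> real) list" where
  "esp N a p = map (\<lambda>j. (is_horiz p j, edge_label a p j)) [1..<N+1]"

lemma wt_chainw:
  "wt_GP N a c1 c2 p lam = c1 powi (lam 1 0 - lam 2 0) *
     chainw c2 (esp N a p) (lam 1 0, lam 2 0) (map (\<lambda>j. (lam 1 j, lam 2 j)) [1..<N+1])"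
proof -
  define lv where "lv = (\<lambda>j. (lam 1 j, lam 2 j))"
  have fac: "(\<Prod>i\<in>{1,2}. edge_label a p j powi (lam i (up_idx p j) - lam i (low_idx p j))
                      * ind (lam i (up_idx p j) \<ge> lam i (low_idx p j)))
        * ind (lam 1 (low_idx p j) \<ge> lam 2 (up_idx p j))
       = Ew (is_horiz p j) (edge_label a p j) (lv (j-1)) (lv j)" for j
    by (simp add: Ew_def Eu_def up_idx_def low_idx_def lv_def)
  have "chainw c2 (esp N a p) (lv 0) (map lv [1..<N+1])
      = (\<Prod>j\<in>{0+1..0+N}. Ew (is_horiz p j) (edge_label a p j) (lv (j-1)) (lv j)) * c2 powi (fst (lv (0+N)) - snd (lv (0+N)))"
    using chainw_prod[where H="is_horiz p" and Lb="edge_label a p" and lv=lv and m=0 and n=N and y=c2]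
    by (simp add: esp_def)
  then show ?thesis
    unfolding wt_GP_def fac by (simp add: lv_def mult_ac)
qed



definition cfg_of :: "nat \<Rightarrow> int \<Rightarrow> int \<times> (int \<times> int) list \<Rightarrow> nat \<Rightarrow> nat \<Rightarrow> int" where
  "cfg_of N x = (\<lambda>(y0, Ls) i j.
     if i = 1 then (if j = 0 then x else if j \<le> N then fst (Ls ! (j-1)) else 0)
     else if i = 2 then (if j = 0 then y0 else if j \<le> N then snd (Ls ! (j-1)) else 0)
     else 0)"

definition cfg_inv :: "nat \<Rightarrow> (nat \<Rightarrow> nat \<Rightarrow> int) \<Rightarrow> int \<times> (int \<times> int) list" where
  "cfg_inv N lam = (lam 2 0, map (\<lambda>j. (lam 1 j, lam 2 j)) [1..<N+1])"

lemma cfg_map: "length Ls = N \<Longrightarrow>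
  map (\<lambda>j. (cfg_of N x (y0,Ls) 1 j, cfg_of N x (y0,Ls) 2 j)) [1..<N+1] = Ls"
  by (rule nth_equalityI) (auto simp: cfg_of_def nth_upt simp del: upt_Suc)

lemma configs_bij:
  "bij_betw (cfg_of N x) (UNIV \<times> {Ls. length Ls = N}) (configs N x)"
proof (rule bij_betwI[where g="cfg_inv N"])
  show "cfg_of N x \<in> UNIV \<times> {Ls. length Ls = N} \<rightarrow> configs N x"
    by (auto simp: cfg_of_def configs_def)
  show "cfg_inv N \<in> configs N x \<rightarrow> UNIV \<times> {Ls. length Ls = N}"
    by (auto simp: cfg_inv_def)
  show "cfg_inv N (cfg_of N x yL) = yL" if "yL \<in> UNIV \<times> {Ls. length Ls = N}" for yL
  proof -
    obtain y0 Ls where yL: "yL = (y0, Ls)" by fastforce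
    have len: "length Ls = N" using that yL by simp
    have "map (\<lambda>j. (cfg_of N x yL 1 j, cfg_of N x yL 2 j)) [1..<N+1] = Ls"
      by (rule nth_equalityI) (auto simp: len cfg_of_def yL nth_upt simp del: upt_Suc)
    then show ?thesis by (simp add: cfg_inv_def yL cfg_of_def)
  qed
  show "cfg_of N x (cfg_inv N lam) = lam" if "lam \<in> configs N x" for lam
  proof (intro ext)
    fix i j
    show "cfg_of N x (cfg_inv N lam) i j = lam i j"
      using that by (auto simp: cfg_of_def cfg_inv_def configs_def nth_upt simp del: upt_Suc)
  qed
qed

lemma path_sum:
  assumes N1: "N \<ge> 1" and ok: "labs_ok L \<rho> c2" and c2: "0 < c2" and c1: "0 < c1" "c1*\<rho> < 1"
    and rho: "0 < \<rho>"
    and labL: "set (map snd (esp N a p)) \<subseteq> L" and labpos: "\<forall>e\<in>set (esp N a p). 0 < snd e"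
  shows "(wt_GP N a c1 c2 p has_sum infsum (\<lambda>d. c1^d * vec c2 (map snd (esp N a p)) d) UNIV) (configs N x)"
proof -
  define es where "es = esp N a p"
  define V where "V = vec c2 (map snd es)"
  define T where "T = {Ls::(int\<times>int) list. length Ls = N}"
  have lenes: "length es = N" by (simp add: es_def esp_def)
  have gV: "good \<rho> V" unfolding V_def es_def by (rule vec_good[OF ok labL])
  obtain C where C: "\<And>d. V d \<le> C * \<rho>^d" and Vnn: "\<And>d. 0 \<le> V d"
    using gV unfolding good_def by blast
  have geo: "((\<lambda>d. C * (c1*\<rho>)^d) has_sum (C * (1/(1-c1*\<rho>)))) UNIV"
    by (rule has_sum_cmult_right, rule has_sum_geom) (use c1 rho in auto)
  have summ: "(\<lambda>d. c1^d * V d) summable_on UNIV"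
  proof (rule summable_on_comparison_test[OF has_sum_imp_summable[OF geo]])
    fix d :: nat
    show "c1^d * V d \<le> C * (c1*\<rho>)^d"
      using mult_left_mono[OF C[of d], of "c1^d"] c1 by (simp add: power_mult_distrib mult_ac)
    show "0 \<le> c1^d * V d" using Vnn c1 by simp
  qed
  define \<Phi> where "\<Phi> = infsum (\<lambda>d. c1^d * V d) UNIV"
  have hsP: "((\<lambda>d. c1^d * V d) has_sum \<Phi>) UNIV"
    using summ unfolding \<Phi>_def by (simp add: summable_iff_has_sum_infsum)
  define u where "u = (\<lambda>y0. if y0 \<le> x then c1 powi (x-y0) * V (nat (x - y0)) else 0)"
  have outer: "(u has_sum \<Phi>) UNIV"
  proof -
    have "(u has_sum \<Phi>) {..x} \<longleftrightarrow> ((\<lambda>d. c1^d * V d) has_sum \<Phi>) UNIV"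
    proof (rule has_sum_reindex_bij_witness[where j="\<lambda>y0. nat (x - y0)" and i="\<lambda>d. x - int d"])
      fix y0 assume "y0 \<in> {..x}"
      then show "c1 ^ nat (x - y0) * V (nat (x - y0)) = u y0"
        by (simp add: u_def powi_nat[symmetric])
    qed auto
    then have "(u has_sum \<Phi>) {..x}" using hsP by simp
    then show ?thesis by (subst (asm) has_sum_cong_neutral[where T=UNIV]) (auto simp: u_def)
  qed
  have wt: "wt_GP N a c1 c2 p (cfg_of N x (y0, Ls)) = c1 powi (x - y0) * chainw c2 es (x, y0) Ls"
    if "Ls \<in> T" for Ls y0
    using that wt_chainw[of N a c1 c2 p "cfg_of N x (y0, Ls)"] cfg_map[of Ls N x y0]
    by (simp add: T_def es_def) (simp add: cfg_of_def)
  have nnw: "0 \<le> wt_GP N a c1 c2 p (cfg_of N x (y0, Ls))" if "Ls \<in> T" for Ls y0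
    unfolding wt[OF that] using c1 c2 labpos
    by (intro mult_nonneg_nonneg chainw_nonneg) (auto simp: es_def)
  have inner: "((\<lambda>Ls. wt_GP N a c1 c2 p (cfg_of N x (y0, Ls))) has_sum u y0) T" for y0
  proof -
    show ?thesis
    proof (cases "y0 \<le> x")
      case True
      have "(chainw c2 es (x, y0) has_sum V (nat (x - y0))) T"
        using chain_has_sum[OF ok c2, of es "(x,y0)"] labL labpos True
        by (simp add: es_def V_def T_def lenes[unfolded es_def])
      from has_sum_cmult_right[OF this, of "c1 powi (x - y0)"]
      show ?thesis using True
        by (subst has_sum_cong[where g="\<lambda>Ls. c1 powi (x - y0) * chainw c2 es (x, y0) Ls"]) (auto simp: wt u_def)
    next
      case False
      obtain e es' where ees: "es = e # es'" using lenes N1 by (cases es) auto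
      have "chainw c2 es (x, y0) Ls = 0" for Ls
        using Ew_nz[of "fst e" "snd e" "(x,y0)" "hd Ls"] False by (auto simp: ees)
      then show ?thesis using False
        by (subst has_sum_cong[where g="\<lambda>Ls. 0"]) (auto simp: wt u_def)
    qed
  qed
  have "((\<lambda>(y0, Ls). wt_GP N a c1 c2 p (cfg_of N x (y0, Ls))) has_sum \<Phi>) (UNIV \<times> T)"
    using tonelli_R[of UNIV "\<lambda>_. T" "\<lambda>(y0, Ls). wt_GP N a c1 c2 p (cfg_of N x (y0, Ls))" u \<Phi>] nnw inner outer
    by auto
  then have "((\<lambda>z. wt_GP N a c1 c2 p (cfg_of N x z)) has_sum \<Phi>) (UNIV \<times> T)"
    by (simp add: case_prod_unfold)
  then have "(wt_GP N a c1 c2 p has_sum \<Phi>) (configs N x)"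
    using has_sum_reindex_bij_betw[OF configs_bij[of N x], of "wt_GP N a c1 c2 p" \<Phi>] by (simp add: T_def)
  then show ?thesis by (simp add: \<Phi>_def V_def es_def)
qed



definition kk :: "(nat \<Rightarrow> int \<times> int) \<Rightarrow> nat \<Rightarrow> int" where
  "kk p j = (if is_horiz p j then fst (p j) else snd (p (j-1)))"

lemma edge_label_kk: "edge_label a p j = a (kk p j)"
  by (simp add: edge_label_def kk_def)

lemma drp_step:
  assumes "down_right_path N p" "1 \<le> j" "j \<le> N"
  shows "(fst (p j) = fst (p (j-1)) + 1 \<and> snd (p j) = snd (p (j-1)) \<and> is_horiz p j) \<or>
         (fst (p j) = fst (p (j-1)) \<and> snd (p j) = snd (p (j-1)) - 1 \<and> \<not> is_horiz p j)"
  using assms unfolding down_right_path_def is_horiz_def is_vert_def by force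

lemma drp_gap:
  assumes "down_right_path N p"
  shows "j \<le> N \<Longrightarrow> fst (p j) - snd (p j) = int j"
proof (induction j)
  case 0 then show ?case using assms by (auto simp: down_right_path_def)
next
  case (Suc j)
  then show ?case using drp_step[OF assms, of "Suc j"] by auto
qed

lemma drp_mono:
  assumes "down_right_path N p"
  shows "i \<le> j \<Longrightarrow> j \<le> N \<Longrightarrow> fst (p i) \<le> fst (p j) \<and> snd (p j) \<le> snd (p i)"
proof (induction j)
  case 0 then show ?case by simp
next
  case (Suc j)
  show ?case
  proof (cases "i = Suc j")
    case True then show ?thesis by simp
  next
    case False
    then have "i \<le> j" using Suc.prems by simp
    then have "fst (p i) \<le> fst (p j) \<and> snd (p j) \<le> snd (p i)" using Suc by simp
    then show ?thesis using drp_step[OF assms, of "Suc j"] Suc.prems by auto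
  qed
qed

lemma drp_p0: "down_right_path N p \<Longrightarrow> fst (p 0) = snd (p 0)"
  by (auto simp: down_right_path_def)

lemma kk_H:
  assumes "down_right_path N p" "1 \<le> j" "j \<le> N" "is_horiz p j"
  shows "kk p j = fst (p (j-1)) + 1" "kk p j > snd (p 0)"
proof -
  show k: "kk p j = fst (p (j-1)) + 1"
    using drp_step[OF assms(1-3)] assms(4) by (auto simp: kk_def)
  have "fst (p 0) \<le> fst (p (j-1))" using drp_mono[OF assms(1), of 0 "j-1"] assms by simp
  then show "kk p j > snd (p 0)" using k drp_p0[OF assms(1)] by simp
qed

lemma kk_V:
  assumes "down_right_path N p" "1 \<le> j" "j \<le> N" "\<not> is_horiz p j"
  shows "kk p j = snd (p j) + 1" "kk p j \<le> snd (p 0)"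
proof -
  show k: "kk p j = snd (p j) + 1"
    using drp_step[OF assms(1-3)] assms(4) by (auto simp: kk_def)
  have "snd (p (j-1)) \<le> snd (p 0)" using drp_mono[OF assms(1), of 0 "j-1"] assms by simp
  then show "kk p j \<le> snd (p 0)" using assms(4) by (simp add: kk_def)
qed

lemma kk_inj:
  assumes "down_right_path N p"
  shows "inj_on (kk p) {1..N}"
proof -
  have lt: "kk p j \<noteq> kk p j'" if "1 \<le> j" "j < j'" "j' \<le> N" for j j'
  proof (cases "is_horiz p j"; cases "is_horiz p j'")
    assume h: "is_horiz p j" "is_horiz p j'"
    have "fst (p j) \<le> fst (p (j'-1))" using drp_mono[OF assms, of j "j'-1"] that by simp
    moreover have "fst (p j) = fst (p (j-1)) + 1"
      using drp_step[OF assms, of j] that h by auto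
    ultimately show ?thesis using kk_H[OF assms, of j] kk_H[OF assms, of j'] that h by auto
  next
    assume h: "is_horiz p j" "\<not> is_horiz p j'"
    then show ?thesis using kk_H[OF assms, of j] kk_V[OF assms, of j'] that by auto
  next
    assume h: "\<not> is_horiz p j" "is_horiz p j'"
    then show ?thesis using kk_V[OF assms, of j] kk_H[OF assms, of j'] that by auto
  next
    assume h: "\<not> is_horiz p j" "\<not> is_horiz p j'"
    have "snd (p (j'-1)) \<le> snd (p j)" using drp_mono[OF assms, of j "j'-1"] that by simp
    moreover have "snd (p (j'-1)) = snd (p j') + 1"
      using drp_step[OF assms, of j'] that h by auto
    ultimately show ?thesis using kk_V[OF assms, of j] kk_V[OF assms, of j'] that h by auto
  qed
  show ?thesis
    unfolding inj_on_def
  proof (intro ballI impI)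
    fix j j' assume "j \<in> {1..N}" "j' \<in> {1..N}" "kk p j = kk p j'"
    then show "j = j'" using lt[of j j'] lt[of j' j] by (metis atLeastAtMost_iff linorder_neqE_nat)
  qed
qed

lemma kk_range:
  assumes "down_right_path N p" "j \<in> {1..N}"
  shows "kk p j \<in> {snd (p N) + 1 .. fst (p N)}"
proof (cases "is_horiz p j")
  case True
  have "fst (p j) \<le> fst (p N)" using drp_mono[OF assms(1), of j N] assms by simp
  moreover have "kk p j = fst (p j)" using True by (simp add: kk_def)
  moreover have "snd (p N) \<le> snd (p 0)" using drp_mono[OF assms(1), of 0 N] by simp
  ultimately show ?thesis using kk_H[OF assms(1), of j] assms True by auto
next
  case False
  have "snd (p N) \<le> snd (p j)" using drp_mono[OF assms(1), of j N] assms by simp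
  moreover have "fst (p 0) \<le> fst (p N)" using drp_mono[OF assms(1), of 0 N] by simp
  ultimately show ?thesis using kk_V[OF assms(1), of j] assms False drp_p0[OF assms(1)] by auto
qed

lemma kk_image:
  assumes "down_right_path N p"
  shows "kk p ` {1..N} = {snd (p N) + 1 .. snd (p N) + int N}"
proof -
  have hi: "fst (p N) = snd (p N) + int N" using drp_gap[OF assms, of N] by simp
  show ?thesis
  proof (rule card_subset_eq)
    show "finite {snd (p N) + 1 .. snd (p N) + int N}" by simp
    show "kk p ` {1..N} \<subseteq> {snd (p N) + 1 .. snd (p N) + int N}"
      using kk_range[OF assms] hi by auto
    show "card (kk p ` {1..N}) = card {snd (p N) + 1 .. snd (p N) + int N}"
      using card_image[OF kk_inj[OF assms]] by simp
  qed
qed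



lemma per_nat:
  assumes "\<forall>j. a (j + int N) = a j"
  shows "a (j + int n * int N) = a j"
proof (induction n arbitrary: j)
  case 0 then show ?case by simp
next
  case (Suc n)
  have "j + int (Suc n) * int N = (j + int n * int N) + int N" by (simp add: algebra_simps)
  then have "a (j + int (Suc n) * int N) = a (j + int n * int N)" using assms by metis
  then show ?case using Suc by simp
qed

lemma per_int:
  assumes "\<forall>j. a (j + int N) = a j"
  shows "a (j + k * int N) = a j"
proof (cases "k \<ge> 0")
  case True
  then obtain n where "k = int n" by (metis nonneg_eq_int)
  then show ?thesis using per_nat[OF assms] by simp
next
  case False
  then obtain n where n: "k = - int n" by (metis neg_int_cases less_imp_le not_le nonpos_int_cases)
  have "a ((j + k * int N) + int n * int N) = a (j + k * int N)" by (rule per_nat[OF assms])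
  then show ?thesis using n by simp
qed

lemma shift_mset:
  assumes N1: "N \<ge> 1" and per: "\<forall>j. a (j + int N) = a j"
  shows "image_mset a (mset_set {lo+1..lo+int N}) = image_mset a (mset_set {1..int N})"
proof -
  define r where "r = (\<lambda>i::int. (i - 1) mod int N + 1)"
  define A where "A = {lo+1..lo+int N}"
  have ar: "a i = a (r i)" for i
  proof -
    have "i = r i + ((i - 1) div int N) * int N" unfolding r_def
      using div_mult_mod_eq[of "i-1" "int N"] by (simp add: algebra_simps)
    then have "a i = a (r i + ((i - 1) div int N) * int N)" by simp
    also have "\<dots> = a (r i)" by (rule per_int[OF per])
    finally show ?thesis .
  qed
  have inj: "inj_on r A"
  proof
    fix i i' assume ii: "i \<in> A" "i' \<in> A" "r i = r i'"
    then have "(i - 1) mod int N = (i' - 1) mod int N" by (simp add: r_def)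
    then have dv: "int N dvd (i - 1) - (i' - 1)" by (simp add: mod_eq_dvd_iff)
    show "i = i'"
    proof (rule ccontr)
      assume "i \<noteq> i'"
      then have "\<bar>int N\<bar> \<le> \<bar>(i - 1) - (i' - 1)\<bar>" using dv by (intro dvd_imp_le_int) auto
      then show False using ii(1,2) by (auto simp: A_def)
    qed
  qed
  have img: "r ` A = {1..int N}"
  proof (rule card_subset_eq)
    show "finite {1..int N}" by simp
    show "r ` A \<subseteq> {1..int N}"
    proof
      fix z assume "z \<in> r ` A"
      then obtain i where z: "z = r i" by auto
      have "0 \<le> (i - 1) mod int N" "(i - 1) mod int N < int N" using N1 by simp_all
      then show "z \<in> {1..int N}" unfolding z r_def by simp
    qed
    show "card (r ` A) = card {1..int N}" using card_image[OF inj] by (simp add: A_def)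
  qed
  have "image_mset a (mset_set A) = image_mset (a \<circ> r) (mset_set A)"
  proof (rule image_mset_cong)
    fix i show "a i = (a \<circ> r) i" using ar[of i] by (simp only: comp_def)
  qed
  also have "\<dots> = image_mset a (image_mset r (mset_set A))" by (simp add: multiset.map_comp)
  also have "image_mset r (mset_set A) = mset_set (r ` A)" by (rule image_mset_mset_set[OF inj])
  finally show ?thesis using img by (simp add: A_def)
qed

lemma mset_labels:
  assumes N1: "N \<ge> 1" and per: "\<forall>j. a (j + int N) = a j" and p: "down_right_path N p"
  shows "mset (map (edge_label a p) [1..<N+1]) = mset (map (\<lambda>i. a (int i)) [1..<N+1])"
proof -
  have "mset (map (edge_label a p) [1..<N+1]) = image_mset a (image_mset (kk p) (mset_set {1..N}))"
    by (simp add: edge_label_kk[abs_def] mset_upt multiset.map_comp o_def atLeastLessThanSuc_atLeastAtMost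
             del: upt_Suc)
  also have "image_mset (kk p) (mset_set {1..N}) = mset_set (kk p ` {1..N})"
    by (rule image_mset_mset_set[OF kk_inj[OF p]])
  also have "\<dots> = mset_set {snd (p N) + 1 .. snd (p N) + int N}" using kk_image[OF p] by (simp only: One_nat_def)
  finally have L: "mset (map (edge_label a p) [1..<N+1]) = image_mset a (mset_set {snd (p N) + 1 .. snd (p N) + int N})" .
  have "mset (map (\<lambda>i. a (int i)) [1..<N+1]) = image_mset a (image_mset int (mset_set {1..N}))"
    by (simp add: mset_upt multiset.map_comp o_def atLeastLessThanSuc_atLeastAtMost del: upt_Suc)
  also have "image_mset int (mset_set {1..N}) = mset_set (int ` {1..N})"
    by (rule image_mset_mset_set) simp
  also have "int ` {1..N} = {1..int N}"
    by (simp add: image_int_atLeastAtMost)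
  finally have R: "mset (map (\<lambda>i. a (int i)) [1..<N+1]) = image_mset a (mset_set {1..int N})" .
  show ?thesis unfolding L R by (rule shift_mset[OF N1 per])
qed



theorem proposition2p15:
  fixes N :: nat and a :: "int \<Rightarrow> real" and c1 c2 :: real
  assumes "N \<ge> 1"
    and "\<forall>j. a (j + int N) = a j"
    and "\<forall>i\<in>{1..int N}. a i > 0"
    and "c1 > 0" and "c2 > 0"
    and "\<forall>i\<in>{1..int N}. \<forall>j\<in>{1..int N}. a i * a j < 1"
    and "\<forall>i\<in>{1..int N}. a i * c1 < 1"
    and "\<forall>i\<in>{1..int N}. a i * c2 < 1"
    and "c1 * c2 < 1"
  shows "\<exists>Z::real. \<forall>p x. down_right_path N p \<longrightarrow>
           (wt_GP N a c1 c2 p has_sum Z) (configs N x)"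
proof -
  note N1 = assms(1) and per = assms(2) and apos = assms(3) and c1 = assms(4) and c2 = assms(5)
    and aa = assms(6) and ac1 = assms(7) and ac2 = assms(8) and cc = assms(9)
  define L where "L = (\<lambda>i. a (int i)) ` {1..N}"
  have finL: "finite L" and neL: "L \<noteq> {}" using N1 by (auto simp: L_def)
  have Lchar: "\<alpha> \<in> L \<longleftrightarrow> (\<exists>i\<in>{1..int N}. \<alpha> = a i)" for \<alpha>
  proof
    assume "\<alpha> \<in> L" then show "\<exists>i\<in>{1..int N}. \<alpha> = a i" by (auto simp: L_def)
  next
    assume "\<exists>i\<in>{1..int N}. \<alpha> = a i"
    then obtain i where i: "i \<in> {1..int N}" "\<alpha> = a i" by blast
    then have "i = int (nat i)" "nat i \<in> {1..N}" by auto
    then show "\<alpha> \<in> L" unfolding L_def using i by (metis image_eqI)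
  qed
  define am where "am = Max L"
  have amL: "am \<in> L" using finL neL by (simp add: am_def)
  have le_am: "\<alpha> \<le> am" if "\<alpha> \<in> L" for \<alpha> using finL that by (simp add: am_def)
  have Lpos: "0 < \<alpha>" if "\<alpha> \<in> L" for \<alpha> using that apos Lchar by auto
  have Lprod: "\<alpha> * \<beta> < 1" if "\<alpha> \<in> L" "\<beta> \<in> L" for \<alpha> \<beta> using that aa Lchar by auto
  have Lc1: "\<alpha> * c1 < 1" if "\<alpha> \<in> L" for \<alpha> using that ac1 Lchar by auto
  have Lc2: "\<alpha> * c2 < 1" if "\<alpha> \<in> L" for \<alpha> using that ac2 Lchar by auto
  have am0: "0 < am" using Lpos amL by simp
  define lo where "lo = max am c2"
  define hi where "hi = min (1/am) (1/c1)"
  have "am < 1/am" using Lprod[OF amL amL] am0 by (simp add: field_simps)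
  moreover have "am < 1/c1" using Lc1[OF amL] c1 by (simp add: field_simps)
  moreover have "c2 < 1/am" using Lc2[OF amL] am0 by (simp add: field_simps)
  moreover have "c2 < 1/c1" using cc c1 by (simp add: field_simps)
  ultimately have lohi: "lo < hi" by (simp add: lo_def hi_def)
  define \<rho> where "\<rho> = (lo + hi) / 2"
  have r1: "lo < \<rho>" "\<rho> < hi" using lohi by (simp_all add: \<rho>_def)
  have rho0: "0 < \<rho>" using r1 am0 by (simp add: lo_def)
  have "\<rho> < 1/am" "\<rho> < 1/c1" using r1 by (simp_all add: hi_def)
  then have ram: "\<rho> * am < 1" and rc1: "c1 * \<rho> < 1"
    using am0 c1 by (simp_all add: field_simps)
  have ok: "labs_ok L \<rho> c2"
    unfolding labs_ok_def
  proof (intro conjI ballI)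
    fix \<alpha> assume \<alpha>: "\<alpha> \<in> L"
    show "0 \<le> \<alpha>" using Lpos[OF \<alpha>] by simp
    show "\<alpha> < \<rho>" using le_am[OF \<alpha>] r1 by (simp add: lo_def)
    have "\<alpha> * \<rho> \<le> am * \<rho>" using le_am[OF \<alpha>] rho0 by (simp add: mult_right_mono)
    then show "\<alpha> * \<rho> < 1" using ram by (simp add: mult.commute)
  next
    fix \<alpha> \<beta> assume "\<alpha> \<in> L" "\<beta> \<in> L" then show "\<alpha> * \<beta> < 1" by (rule Lprod)
  next
    show "0 \<le> c2" using c2 by simp
    show "c2 \<le> \<rho>" using r1 by (simp add: lo_def)
  qed
  define ls0 where "ls0 = map (\<lambda>i. a (int i)) [1..<N+1]"
  have setls0: "set ls0 = L" by (auto simp: ls0_def L_def atLeastLessThanSuc_atLeastAtMost simp del: upt_Suc)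
  define Z where "Z = infsum (\<lambda>d. c1^d * vec c2 ls0 d) UNIV"
  have "\<forall>p x. down_right_path N p \<longrightarrow> (wt_GP N a c1 c2 p has_sum Z) (configs N x)"
  proof (intro allI impI)
    fix p x assume p: "down_right_path N p"
    have ms: "mset (map snd (esp N a p)) = mset ls0"
      using mset_labels[OF N1 per p] by (simp add: esp_def ls0_def o_def del: upt_Suc)
    have setl: "set (map snd (esp N a p)) = L"
      using ms setls0 by (metis set_mset_mset)
    have labpos: "\<forall>e\<in>set (esp N a p). 0 < snd e"
      using setl Lpos by auto
    have hs: "(wt_GP N a c1 c2 p has_sum infsum (\<lambda>d. c1^d * vec c2 (map snd (esp N a p)) d) UNIV) (configs N x)"
      by (rule path_sum[OF N1 ok c2 c1 rc1 rho0]) (use setl labpos in \<open>auto simp del: set_map\<close>)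
    have "vec c2 (map snd (esp N a p)) = vec c2 ls0"
      by (rule vec_perm[OF ok ms]) (simp only: setl order_refl)
    then show "(wt_GP N a c1 c2 p has_sum Z) (configs N x)" using hs by (simp add: Z_def)
  qed
  then show ?thesis by blast
qed

end
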